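(* Let $M\ge1$ and $K\ge1$ be integers and consider the binomial family $\mathcal F=\{f(y;\theta)=\binom{M}{y}\theta^y(1-\theta)^{M-y}:\theta\in(0,1),\ y\in\{0,\dots,M\}\}$. For any integer $r\ge1$, the condition $(r+1)K-1\le M$ is necessary and sufficient for $\mathcal F$ to be strongly identifiable in the $r$-th order; that is, it is necessary and sufficient for the following property: for any $K$ distinct points $\theta_1,\dots,\theta_K\in(0,1)$ and any reals $\beta_{jl}$, $j=1,\dots,K$, $l=0,\dots,r$, if $$\sup_{y\in\{0,\dots,M\}}\Big|\sum_{j=1}^K\sum_{l=0}^r\beta_{jl}\frac{\partial^lf(y;\theta_j)}{\partial\theta^l}\Big|=0,$$ then $\beta_{jl}=0$ for all $j=1,\dots,K$ and $l=0,\dots,r$. *)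

theory Defs
  imports "HOL-Analysis.Analysis"
begin

definition binom_pmf :: "nat \<Rightarrow> nat \<Rightarrow> real \<Rightarrow> real" where
  "binom_pmf M y \<theta> = real (M choose y) * \<theta> ^ y * (1 - \<theta>) ^ (M - y)"

definition strongly_identifiable :: "nat \<Rightarrow> nat \<Rightarrow> nat \<Rightarrow> bool" where
  "strongly_identifiable M K r \<longleftrightarrow>
    (\<forall>(\<theta> :: nat \<Rightarrow> real) (\<beta> :: nat \<Rightarrow> nat \<Rightarrow> real).
       inj_on \<theta> {1..K} \<and> (\<forall>j\<in>{1..K}. 0 < \<theta> j \<and> \<theta> j < 1) \<and>
       (SUP y\<in>{0..M}. \<bar>\<Sum>j=1..K. \<Sum>l=0..r. \<beta> j l * (deriv ^^ l) (binom_pmf M y) (\<theta> j)\<bar>) = 0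
       \<longrightarrow> (\<forall>j\<in>{1..K}. \<forall>l\<in>{0..r}. \<beta> j l = 0))"

end

theory Submission
  imports Defs "HOL-Computational_Algebra.Polynomial"
begin

lemma homog_exists:
  fixes a :: "nat \<Rightarrow> 'b \<Rightarrow> real"
  assumes "finite S" "card S > m"
  shows "\<exists>x. (\<exists>s\<in>S. x s \<noteq> 0) \<and> (\<forall>i<m. (\<Sum>s\<in>S. a i s * x s) = 0)"
  using assms
proof (induction m arbitrary: S a)
  case 0
  then have "S \<noteq> {}" by auto
  then show ?case by (intro exI[of _ "\<lambda>_. 1"]) auto
next
  case (Suc m)
  show ?case
  proof (cases "\<forall>s\<in>S. a m s = 0")
    case True
    from Suc.IH[of S a] Suc.prems obtain x where
      x: "\<exists>s\<in>S. x s \<noteq> 0" "\<forall>i<m. (\<Sum>s\<in>S. a i s * x s) = 0" by auto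
    show ?thesis using x True by (intro exI[of _ x]) (auto simp: less_Suc_eq)
  next
    case False
    then obtain s0 where s0: "s0 \<in> S" "a m s0 \<noteq> 0" by auto
    define S' where "S' = S - {s0}"
    have fin: "finite S'" using Suc.prems S'_def by auto
    have cS: "card S' > m" using Suc.prems s0 S'_def by auto
    define a' where "a' i s = a i s - a i s0 * a m s / a m s0" for i s
    from Suc.IH[OF fin cS, of a'] obtain x' where
      x': "\<exists>s\<in>S'. x' s \<noteq> 0" "\<forall>i<m. (\<Sum>s\<in>S'. a' i s * x' s) = 0" by auto
    define x where "x s = (if s = s0 then - (\<Sum>t\<in>S'. a m t * x' t) / a m s0 else x' s)" for s
    have split: "(\<Sum>s\<in>S. a i s * x s) = a i s0 * x s0 + (\<Sum>s\<in>S'. a i s * x' s)" for i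
    proof -
      have "(\<Sum>s\<in>S. a i s * x s) = a i s0 * x s0 + (\<Sum>s\<in>S'. a i s * x s)"
        using Suc.prems(1) s0 S'_def by (simp add: sum.remove)
      also have "(\<Sum>s\<in>S'. a i s * x s) = (\<Sum>s\<in>S'. a i s * x' s)"
        by (rule sum.cong) (auto simp: x_def S'_def)
      finally show ?thesis .
    qed
    have eqs: "(\<Sum>s\<in>S. a i s * x s) = 0" if "i < Suc m" for i
    proof (cases "i = m")
      case True
      then show ?thesis using s0 unfolding split by (simp add: x_def)
    next
      case False
      then have "i < m" using that by auto
      then have "(\<Sum>s\<in>S'. a' i s * x' s) = 0" using x' by auto
      then have "(\<Sum>s\<in>S'. a i s * x' s) - a i s0 / a m s0 * (\<Sum>s\<in>S'. a m s * x' s) = 0"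
        by (simp add: a'_def algebra_simps sum_subtractf sum_distrib_left)
      then show ?thesis using s0 unfolding split by (simp add: x_def field_simps)
    qed
    have "\<exists>s\<in>S. x s \<noteq> 0" using x' by (auto simp: x_def S'_def)
    then show ?thesis using eqs by blast
  qed
qed

lemma deriv_funpow_poly: "(deriv ^^ l) (poly p) = poly ((pderiv ^^ l) p)"
proof (induction l)
  case 0 then show ?case by simp
next
  case (Suc l)
  show ?case
    by (simp add: Suc fun_eq_iff DERIV_imp_deriv[OF poly_DERIV])
qed

lemma funpow_pderiv_add: "(pderiv ^^ l) (p + q) = (pderiv ^^ l) p + (pderiv ^^ l) q"
  by (induction l) (auto simp: pderiv_add)

lemma funpow_pderiv_smult: "(pderiv ^^ l) (smult c p) = smult c ((pderiv ^^ l) p)"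
  by (induction l) (auto simp: pderiv_smult)

lemma funpow_pderiv_0: "(pderiv ^^ l) 0 = (0 :: real poly)"
  by (induction l) auto

lemma pderiv_funpow_root:
  fixes a :: real
  assumes "l \<le> n"
  shows "\<exists>q'. (pderiv ^^ l) ([:-a,1:]^n * q) = [:-a,1:]^(n-l) * q' \<and> (poly q a \<noteq> 0 \<longrightarrow> poly q' a \<noteq> 0)"
  using assms
proof (induction l)
  case 0 then show ?case by auto
next
  case (Suc l)
  then obtain q' where q': "(pderiv ^^ l) ([:-a,1:]^n * q) = [:-a,1:]^(n-l) * q'"
    "poly q a \<noteq> 0 \<longrightarrow> poly q' a \<noteq> 0" by auto
  define m where "m = n - Suc l"
  have nl: "n - l = Suc m" using Suc.prems m_def by auto
  define q'' where "q'' = smult (of_nat (Suc m)) q' + [:-a,1:] * pderiv q'"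
  have "(pderiv ^^ Suc l) ([:-a,1:]^n * q) = pderiv ([:-a,1:]^Suc m * q')"
    using q' nl by simp
  also have "\<dots> = [:-a,1:]^m * q''"
    unfolding pderiv_mult pderiv_power_Suc q''_def
    by (simp add: pderiv_pCons algebra_simps)
  finally show ?case using q' m_def by (intro exI[of _ q'']) (auto simp: q''_def)
qed

definition Lf :: "nat \<Rightarrow> nat \<Rightarrow> (nat \<Rightarrow> real) \<Rightarrow> (nat \<Rightarrow> nat \<Rightarrow> real) \<Rightarrow> real poly \<Rightarrow> real" where
  "Lf K r \<theta> \<beta> p = (\<Sum>j=1..K. \<Sum>l=0..r. \<beta> j l * poly ((pderiv ^^ l) p) (\<theta> j))"

definition Bp :: "nat \<Rightarrow> nat \<Rightarrow> real poly" where
  "Bp M y = smult (real (M choose y)) ([:0,1:]^y * [:1,-1:]^(M-y))"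

lemma binom_poly: "binom_pmf M y = poly (Bp M y)"
  by (auto simp: fun_eq_iff binom_pmf_def Bp_def)

lemma Lf_add: "Lf K r \<theta> \<beta> (p + q) = Lf K r \<theta> \<beta> p + Lf K r \<theta> \<beta> q"
  by (simp add: Lf_def funpow_pderiv_add distrib_left sum.distrib)

lemma Lf_smult: "Lf K r \<theta> \<beta> (smult c p) = c * Lf K r \<theta> \<beta> p"
  by (simp add: Lf_def funpow_pderiv_smult sum_distrib_left algebra_simps)

lemma Lf_0: "Lf K r \<theta> \<beta> 0 = 0"
  by (simp add: Lf_def funpow_pderiv_0)

lemma Lf_sum: "Lf K r \<theta> \<beta> (sum f A) = (\<Sum>x\<in>A. Lf K r \<theta> \<beta> (f x))"
proof (cases "finite A")
  case True
  then show ?thesis by (induction A rule: finite_induct) (auto simp: Lf_0 Lf_add)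
next
  case False
  then show ?thesis by (simp add: Lf_0)
qed

lemma monom_expand:
  assumes "k \<le> M"
  shows "monom (1::real) k = (\<Sum>i\<le>M-k. smult (real ((M-k) choose i)) ([:0,1:]^(k+i) * [:1,-1:]^(M-(k+i))))"
proof -
  have "poly (monom (1::real) k) x = poly (\<Sum>i\<le>M-k. smult (real ((M-k) choose i)) ([:0,1:]^(k+i) * [:1,-1:]^(M-(k+i)))) x" for x
  proof -
    have "(x + (1 - x))^(M-k) = (\<Sum>i\<le>M-k. real ((M-k) choose i) * x^i * (1-x)^(M-k-i))"
      by (rule binomial_ring)
    then have "x^k = x^k * (\<Sum>i\<le>M-k. real ((M-k) choose i) * x^i * (1-x)^(M-k-i))" by simp
    also have "\<dots> = (\<Sum>i\<le>M-k. real ((M-k) choose i) * x^(k+i) * (1-x)^(M-(k+i)))"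
      by (simp add: sum_distrib_left power_add algebra_simps diff_diff_add)
    finally show ?thesis by (simp add: poly_sum poly_monom mult.assoc)
  qed
  then show ?thesis using poly_eq_poly_eq_iff by blast
qed

lemma Lf_vanish:
  assumes "\<forall>y\<le>M. Lf K r \<theta> \<beta> (Bp M y) = 0" "degree p \<le> M"
  shows "Lf K r \<theta> \<beta> p = 0"
proof -
  have B: "Lf K r \<theta> \<beta> ([:0,1:]^m * [:1,-1:]^(M-m)) = 0" if "m \<le> M" for m
  proof -
    have "[:0,1:]^m * [:1,-1:]^(M-m) = smult (1 / real (M choose m)) (Bp M m)"
      using that by (simp add: Bp_def)
    then show ?thesis using assms(1) that by (simp add: Lf_smult)
  qed
  have mon: "Lf K r \<theta> \<beta> (monom 1 k) = 0" if "k \<le> M" for k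
    using that unfolding monom_expand[OF that] Lf_sum
    by (intro sum.neutral) (auto simp: Lf_smult B)
  have "Lf K r \<theta> \<beta> p = Lf K r \<theta> \<beta> (\<Sum>i\<le>degree p. smult (coeff p i) (monom 1 i))"
    by (simp add: smult_monom poly_as_sum_of_monoms)
  also have "\<dots> = 0" unfolding Lf_sum
    using assms(2) by (intro sum.neutral) (auto simp: Lf_smult mon)
  finally show ?thesis .
qed

lemma sufficiency:
  assumes deg: "(r+1)*K - 1 \<le> M" and inj: "inj_on \<theta> {1..K}"
    and van: "\<forall>y\<le>M. Lf K r \<theta> \<beta> (Bp M y) = 0"
    and j0: "j0 \<in> {1..K}"
  shows "\<forall>l\<in>{0..r}. \<beta> j0 l = 0"
proof (rule ccontr)
  assume "\<not> ?thesis"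
  then have ne: "{l\<in>{0..r}. \<beta> j0 l \<noteq> 0} \<noteq> {}" by auto
  define l0 where "l0 = Max {l\<in>{0..r}. \<beta> j0 l \<noteq> 0}"
  have l0: "l0 \<le> r" "\<beta> j0 l0 \<noteq> 0" using Max_in[OF _ ne] l0_def by auto
  have above: "\<beta> j0 l = 0" if "l0 < l" "l \<le> r" for l
    using Max_ge[of "{l\<in>{0..r}. \<beta> j0 l \<noteq> 0}" l] that l0_def by fastforce
  define J where "J = {1..K} - {j0}"
  have finJ: "finite J" by (simp add: J_def)
  have cardJ: "card J = K - 1" using j0 by (simp add: J_def)
  define Q where "Q = (\<Prod>i\<in>J. [:-\<theta> i, 1:]^(r+1))"
  define p where "p = [:-\<theta> j0, 1:]^l0 * Q"
  have "degree Q \<le> (\<Sum>i\<in>J. degree ([:-\<theta> i, 1:]^(r+1)))"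
    unfolding Q_def using degree_prod_sum_le[OF finJ] by (simp add: o_def)
  also have "\<dots> \<le> (\<Sum>i\<in>J. r+1)"
    by (intro sum_mono) (metis degree_linear_power order_refl)
  finally have dQ: "degree Q \<le> (K-1)*(r+1)" using cardJ by simp
  have "degree p \<le> l0 + degree Q" unfolding p_def
    by (metis add_le_mono degree_linear_power degree_mult_le order.trans order_refl)
  also have "\<dots> \<le> r + (K-1)*(r+1)" using dQ l0 by simp
  also have "\<dots> = (r+1)*K - 1" using j0 by (cases K) (auto simp: algebra_simps)
  finally have dp: "degree p \<le> M" using deg by simp
  have L0: "Lf K r \<theta> \<beta> p = 0" by (rule Lf_vanish[OF van dp])
  have other: "poly ((pderiv ^^ l) p) (\<theta> i) = 0" if "i \<in> J" "l \<le> r" for i l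
  proof -
    define Q' where "Q' = [:-\<theta> j0, 1:]^l0 * (\<Prod>i\<in>J-{i}. [:-\<theta> i, 1:]^(r+1))"
    have peq: "p = [:-\<theta> i, 1:]^(r+1) * Q'"
      unfolding p_def Q_def Q'_def prod.remove[OF finJ that(1)] by (simp only: mult.left_commute)
    have lr: "l \<le> r+1" using that by simp
    obtain q' where q'0: "(pderiv ^^ l) ([:-\<theta> i, 1:]^(r+1) * Q') = [:-\<theta> i, 1:]^(r+1-l) * q'"
      using pderiv_funpow_root[OF lr, of "\<theta> i" Q'] by blast
    have "(pderiv ^^ l) p = [:-\<theta> i, 1:]^(r+1-l) * q'" unfolding peq by (rule q'0)
    moreover have "r+1-l = Suc (r - l)" using that by auto
    ultimately show ?thesis by simp
  qed
  have PQ: "poly Q (\<theta> j0) \<noteq> 0"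
  proof -
    have "poly ([:-\<theta> i, 1:]^(r+1)) (\<theta> j0) \<noteq> 0" if "i \<in> J" for i
    proof -
      have "\<theta> i \<noteq> \<theta> j0" using that j0 inj unfolding J_def inj_on_def by blast
      then show ?thesis by (simp only: poly_power) simp
    qed
    then show ?thesis unfolding Q_def poly_prod using finJ by (subst prod_zero_iff) blast+
  qed
  obtain q' where q': "(pderiv ^^ l0) p = [:-\<theta> j0, 1:]^(l0-l0) * q'" "poly q' (\<theta> j0) \<noteq> 0"
    using pderiv_funpow_root[OF order_refl, of l0 "\<theta> j0" Q] PQ unfolding p_def by blast
  have below: "poly ((pderiv ^^ l) p) (\<theta> j0) = 0" if ll: "l < l0" for l
  proof -
    obtain q'' where "(pderiv ^^ l) p = [:-\<theta> j0, 1:]^(l0-l) * q''"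
      using pderiv_funpow_root[OF less_imp_le[OF ll], of "\<theta> j0" Q] unfolding p_def by blast
    moreover have "l0-l = Suc (l0 - l - 1)" using ll by auto
    ultimately show ?thesis by simp
  qed
  have "Lf K r \<theta> \<beta> p = (\<Sum>l=0..r. \<beta> j0 l * poly ((pderiv ^^ l) p) (\<theta> j0))
      + (\<Sum>j\<in>J. \<Sum>l=0..r. \<beta> j l * poly ((pderiv ^^ l) p) (\<theta> j))"
    unfolding Lf_def J_def using j0 by (simp add: sum.remove)
  also have "(\<Sum>j\<in>J. \<Sum>l=0..r. \<beta> j l * poly ((pderiv ^^ l) p) (\<theta> j)) = 0"
    by (intro sum.neutral ballI) (auto simp: other)
  also have "(\<Sum>l=0..r. \<beta> j0 l * poly ((pderiv ^^ l) p) (\<theta> j0))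
      = \<beta> j0 l0 * poly ((pderiv ^^ l0) p) (\<theta> j0)
        + (\<Sum>l\<in>{0..r}-{l0}. \<beta> j0 l * poly ((pderiv ^^ l) p) (\<theta> j0))"
    using l0 by (simp add: sum.remove)
  also have "(\<Sum>l\<in>{0..r}-{l0}. \<beta> j0 l * poly ((pderiv ^^ l) p) (\<theta> j0)) = 0"
  proof (intro sum.neutral ballI)
    fix l assume l: "l \<in> {0..r}-{l0}"
    show "\<beta> j0 l * poly ((pderiv ^^ l) p) (\<theta> j0) = 0"
    proof (cases "l < l0")
      case True then show ?thesis using below by simp
    next
      case False then show ?thesis using above l by auto
    qed
  qed
  finally have "\<beta> j0 l0 * poly ((pderiv ^^ l0) p) (\<theta> j0) = 0" using L0 by simp
  then show False using l0 q' by simp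
qed

lemma sup_zero_iff:
  fixes g :: "nat \<Rightarrow> real"
  shows "(SUP y\<in>{0..M}. \<bar>g y\<bar>) = 0 \<longleftrightarrow> (\<forall>y\<le>M. g y = 0)"
proof
  assume h: "(SUP y\<in>{0..M}. \<bar>g y\<bar>) = 0"
  show "\<forall>y\<le>M. g y = 0"
  proof (intro allI impI)
    fix y assume "y \<le> M"
    then have "\<bar>g y\<bar> \<le> (SUP y\<in>{0..M}. \<bar>g y\<bar>)"
      by (intro cSUP_upper) (auto intro: bdd_above_finite)
    then show "g y = 0" using h by simp
  qed
next
  assume h: "\<forall>y\<le>M. g y = 0"
  have "(SUP y\<in>{0..M}. \<bar>g y\<bar>) = (SUP y\<in>{0..M}. (0::real))"
    by (rule SUP_cong) (auto simp: h)
  then show "(SUP y\<in>{0..M}. \<bar>g y\<bar>) = 0" by simp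
qed

lemma sum_rewrite:
  "(\<Sum>j=1..K. \<Sum>l=0..r. \<beta> j l * (deriv ^^ l) (binom_pmf M y) (\<theta> j)) = Lf K r \<theta> \<beta> (Bp M y)"
  by (simp add: Lf_def binom_poly deriv_funpow_poly)

theorem proposition1:
  fixes M K r :: nat
  assumes "M \<ge> 1" and "K \<ge> 1" and "r \<ge> 1"
  shows "(r + 1) * K - 1 \<le> M \<longleftrightarrow> strongly_identifiable M K r"
proof
  assume deg: "(r + 1) * K - 1 \<le> M"
  show "strongly_identifiable M K r"
    unfolding strongly_identifiable_def sum_rewrite sup_zero_iff
    using sufficiency[OF deg] by blast
next
  assume SI: "strongly_identifiable M K r"
  show "(r + 1) * K - 1 \<le> M"
  proof (rule ccontr)
    assume "\<not> ?thesis"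
    then have big: "card ({1..K} \<times> {0..r}) > M + 1" by (simp add: card_cartesian_product algebra_simps)
    define \<theta> where "\<theta> j = real j / real (K + 1)" for j
    define a where "a y jl = (deriv ^^ snd jl) (binom_pmf M y) (\<theta> (fst jl))" for y jl
    obtain x where x: "\<exists>s\<in>{1..K} \<times> {0..r}. x s \<noteq> 0"
      "\<forall>i<M+1. (\<Sum>s\<in>{1..K} \<times> {0..r}. a i s * x s) = 0"
      using homog_exists[OF _ big, of a] by auto
    define \<beta> where "\<beta> j l = x (j, l)" for j l
    have inj: "inj_on \<theta> {1..K}" by (auto simp: inj_on_def \<theta>_def)
    have rng: "\<forall>j\<in>{1..K}. 0 < \<theta> j \<and> \<theta> j < 1" by (auto simp: \<theta>_def)
    have "(\<Sum>j=1..K. \<Sum>l=0..r. \<beta> j l * (deriv ^^ l) (binom_pmf M y) (\<theta> j)) = 0" if "y \<le> M" for y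
    proof -
      have "(\<Sum>j=1..K. \<Sum>l=0..r. \<beta> j l * (deriv ^^ l) (binom_pmf M y) (\<theta> j))
          = (\<Sum>s\<in>{1..K} \<times> {0..r}. a y s * x s)"
        by (simp add: sum.cartesian_product a_def \<beta>_def case_prod_beta mult.commute)
      then show ?thesis using x(2) that by simp
    qed
    then have "(SUP y\<in>{0..M}. \<bar>\<Sum>j=1..K. \<Sum>l=0..r. \<beta> j l * (deriv ^^ l) (binom_pmf M y) (\<theta> j)\<bar>) = 0"
      unfolding sup_zero_iff by blast
    then have "\<forall>j\<in>{1..K}. \<forall>l\<in>{0..r}. \<beta> j l = 0"
      using SI inj rng unfolding strongly_identifiable_def by blast
    then show False using x(1) by (auto simp: \<beta>_def)
  qed
qed

end
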